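(* Let $M>0$, $\tau>0$, $p'=\lfloor p/2\rfloor$, and for $\theta=(\theta_1,\dots,\theta_{p'})\in\{0,1\}^{p'}$ define $\Sigma(\theta)$ by $$\Sigma(\theta)^{-1}=M^{-1}I_p+\sum_{m=1}^{p'}\theta_m\frac{\tau}{\sqrt n}e_me_m^T.$$ If $\tau/\sqrt n\le M/3$ and $\tau/M\le1/3$, then there exists a positive constant $C$ such that $$\min_{H(\theta,\theta')\ge1}\frac{\|w_{GMV}(\Sigma(\theta'))-w_{GMV}(\Sigma(\theta))\|^2}{H(\theta,\theta')}\cdot\frac{p'}{2}\cdot\min_{H(\theta,\theta')=1}\|\mathbb{P}_\theta\wedge\mathbb{P}_{\theta'}\|\ \ge\ \frac{C}{np}$$ for all sufficiently large $n$.
   Context: $e_m$ is the $m$-th standard basis vector of $\mathbb{R}^p$. $H(\theta,\theta')=\sum_m|\theta_m-\theta'_m|$ is the Hamming distance. $\mathbb{P}_\theta$ is the joint law of $X_1,\dots,X_n$ i.i.d. $N_p(0,\Sigma(\theta))$. For probability measures $P,Q$ with densities $p,q$ w.r.t. a common dominating measure, $\|P\wedge Q\|=\int\min(p,q)$. For $\Sigma\in\mathcal{C}_p$ (symmetric positive definite), $w_{GMV}(\Sigma)=\Sigma^{-1}\mathbf{1}/(\mathbf{1}^T\Sigma^{-1}\mathbf{1})$, the minimizer of $w^T\Sigma w$ subject to $w^T\mathbf{1}=1$; $\|\cdot\|$ is the Euclidean norm. Here $p=p_n\to\infty$. *)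

theory Defs
  imports "HOL-Analysis.Analysis" "Jordan_Normal_Form.Determinant"
begin

definition minv :: "real mat \<Rightarrow> real mat" where
  "minv A = (SOME B. B \<in> carrier_mat (dim_row A) (dim_row A) \<and>
                     A * B = 1\<^sub>m (dim_row A) \<and> B * A = 1\<^sub>m (dim_row A))"

definition enorm :: "real vec \<Rightarrow> real" where
  "enorm v = sqrt (v \<bullet> v)"

definition w_GMV :: "real mat \<Rightarrow> real vec" where
  "w_GMV S = (let p = dim_row S; one = vec p (\<lambda>_. 1) in
      (1 / (one \<bullet> (minv S *\<^sub>v one))) \<cdot>\<^sub>v (minv S *\<^sub>v one))"

text \<open>Density (w.r.t. Lebesgue measure on R^p, vectors as functions on {..<p})
  of N_p(0,Sigma).\<close>
definition mvn_density :: "real mat \<Rightarrow> (nat \<Rightarrow> real) \<Rightarrow> real" where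
  "mvn_density S x = (let p = dim_row S; Si = minv S in
      (2 * pi) powr (- real p / 2) * det S powr (- 1 / 2) *
      exp (- (1/2) * (\<Sum>i<p. \<Sum>j<p. x i * Si $$ (i,j) * x j)))"

definition sample_space :: "nat \<Rightarrow> nat \<Rightarrow> (nat \<Rightarrow> nat \<Rightarrow> real) measure" where
  "sample_space n p = PiM {..<n} (\<lambda>_. PiM {..<p} (\<lambda>_. lborel))"

definition joint_density :: "nat \<Rightarrow> real mat \<Rightarrow> (nat \<Rightarrow> nat \<Rightarrow> real) \<Rightarrow> real" where
  "joint_density n S X = (\<Prod>i<n. mvn_density S (X i))"

definition joint_law :: "nat \<Rightarrow> real mat \<Rightarrow> (nat \<Rightarrow> nat \<Rightarrow> real) measure" where
  "joint_law n S = density (sample_space n (dim_row S)) (\<lambda>X. ennreal (joint_density n S X))"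

definition affinity :: "'a measure \<Rightarrow> ('a \<Rightarrow> real) \<Rightarrow> ('a \<Rightarrow> real) \<Rightarrow> real" where
  "affinity \<nu> f g = (\<integral>x. min (f x) (g x) \<partial>\<nu>)"

text \<open>{0,1}^{p'}, represented as functions nat => real vanishing from index p' on.\<close>
definition Theta :: "nat \<Rightarrow> (nat \<Rightarrow> real) set" where
  "Theta q = {\<theta>. (\<forall>m<q. \<theta> m \<in> {0,1}) \<and> (\<forall>m\<ge>q. \<theta> m = 0)}"

definition hamming :: "nat \<Rightarrow> (nat \<Rightarrow> real) \<Rightarrow> (nat \<Rightarrow> real) \<Rightarrow> real" where
  "hamming q \<theta> \<theta>' = (\<Sum>m<q. \<bar>\<theta> m - \<theta>' m\<bar>)"

definition Sigma_inv :: "real \<Rightarrow> real \<Rightarrow> nat \<Rightarrow> nat \<Rightarrow> (nat \<Rightarrow> real) \<Rightarrow> real mat" where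
  "Sigma_inv M \<tau> n p \<theta> = (1 / M) \<cdot>\<^sub>m 1\<^sub>m p +
     mat p p (\<lambda>(i,j). \<Sum>m<p div 2. \<theta> m * (\<tau> / sqrt (real n)) *
                         (unit_vec p m $ i) * (unit_vec p m $ j))"

definition Sigma :: "real \<Rightarrow> real \<Rightarrow> nat \<Rightarrow> nat \<Rightarrow> (nat \<Rightarrow> real) \<Rightarrow> real mat" where
  "Sigma M \<tau> n p \<theta> = minv (Sigma_inv M \<tau> n p \<theta>)"

definition lhs_quantity :: "real \<Rightarrow> real \<Rightarrow> nat \<Rightarrow> nat \<Rightarrow> real" where
  "lhs_quantity M \<tau> n p = (let q = p div 2; S = Sigma M \<tau> n p in
     Min {(enorm (w_GMV (S \<theta>') - w_GMV (S \<theta>)))\<^sup>2 / hamming q \<theta> \<theta>' | \<theta> \<theta>'.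
            \<theta> \<in> Theta q \<and> \<theta>' \<in> Theta q \<and> hamming q \<theta> \<theta>' \<ge> 1}
     * (real q / 2)
     * Min {affinity (sample_space n p) (joint_density n (S \<theta>)) (joint_density n (S \<theta>')) | \<theta> \<theta>'.
            \<theta> \<in> Theta q \<and> \<theta>' \<in> Theta q \<and> hamming q \<theta> \<theta>' = 1})"

end

theory Submission
  imports Defs "HOL-Probability.Distributions"
begin

definition diagm :: "nat \<Rightarrow> (nat \<Rightarrow> real) \<Rightarrow> real mat" where
  "diagm p f = mat p p (\<lambda>(i,j). if i = j then f i else 0)"

lemma diagm_carrier[simp]: "diagm p f \<in> carrier_mat p p" "dim_row (diagm p f) = p" "dim_col (diagm p f) = p"
  by (auto simp: diagm_def)

lemma diagm_index[simp]: "i < p \<Longrightarrow> j < p \<Longrightarrow> diagm p f $$ (i,j) = (if i = j then f i else 0)"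
  by (simp add: diagm_def)

lemma diagm_mult: "diagm p f * diagm p g = diagm p (\<lambda>i. f i * g i)"
proof (rule eq_matI)
  fix i j assume ij: "i < dim_row (diagm p (\<lambda>i. f i * g i))" "j < dim_col (diagm p (\<lambda>i. f i * g i))"
  hence ij': "i < p" "j < p" by auto
  have "(diagm p f * diagm p g) $$ (i,j) = (\<Sum>k\<in>{0..<p}. diagm p f $$ (i,k) * diagm p g $$ (k,j))"
    using ij' by (simp add: scalar_prod_def row_def col_def del: diagm_index)
  also have "\<dots> = (\<Sum>k\<in>{0..<p}. if k = i then f i * diagm p g $$ (i,j) else 0)"
    by (intro sum.cong) (auto simp: ij')
  also have "\<dots> = f i * diagm p g $$ (i,j)" using ij' by (subst sum.delta) auto
  finally show "(diagm p f * diagm p g) $$ (i,j) = diagm p (\<lambda>i. f i * g i) $$ (i,j)"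
    using ij' by simp
qed auto


lemma diagm_one: "diagm p (\<lambda>_. 1) = 1\<^sub>m p"
  by (rule eq_matI) auto

lemma minv_diagm:
  assumes "\<And>i. i < p \<Longrightarrow> f i \<noteq> 0"
  shows "minv (diagm p f) = diagm p (\<lambda>i. 1 / f i)"
proof -
  let ?A = "diagm p f" and ?B = "diagm p (\<lambda>i. 1 / f i)"
  have e1: "diagm p (\<lambda>i. f i * (1 / f i)) = diagm p (\<lambda>_. 1)"
    by (rule eq_matI) (auto simp: assms)
  have e2: "diagm p (\<lambda>i. (1 / f i) * f i) = diagm p (\<lambda>_. 1)"
    by (rule eq_matI) (auto simp: assms)
  have AB: "?A * ?B = 1\<^sub>m p" "?B * ?A = 1\<^sub>m p"
    unfolding diagm_mult e1 e2 diagm_one by auto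
  have ex: "\<exists>B. B \<in> carrier_mat (dim_row ?A) (dim_row ?A) \<and> ?A * B = 1\<^sub>m (dim_row ?A) \<and> B * ?A = 1\<^sub>m (dim_row ?A)"
    using AB by (intro exI[of _ ?B]) simp
  define C where "C = minv ?A"
  have C: "C \<in> carrier_mat p p" "?A * C = 1\<^sub>m p" "C * ?A = 1\<^sub>m p"
    using someI_ex[OF ex] unfolding C_def minv_def by auto
  have "C = C * (?A * ?B)" using C AB by simp
  also have "\<dots> = (C * ?A) * ?B"
    by (rule assoc_mult_mat[symmetric, of C p p ?A p ?B p]) (use C in auto)
  also have "\<dots> = ?B" using C by simp
  finally show ?thesis unfolding C_def .
qed

lemma det_diagm: "det (diagm p f) = (\<Prod>i<p. f i)"
proof -
  have "upper_triangular (diagm p f)" by (auto simp: upper_triangular_def)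
  hence "det (diagm p f) = prod_list (diag_mat (diagm p f))"
    by (rule det_upper_triangular[OF _ diagm_carrier(1)])
  also have "\<dots> = (\<Prod>i<p. f i)" by (simp add: prod_list_diag_prod atLeast0LessThan)
  finally show ?thesis .
qed

definition dg :: "real \<Rightarrow> real \<Rightarrow> nat \<Rightarrow> nat \<Rightarrow> (nat \<Rightarrow> real) \<Rightarrow> nat \<Rightarrow> real" where
  "dg M \<tau> n p \<theta> i = 1 / M + (if i < p div 2 then \<theta> i * (\<tau> / sqrt (real n)) else 0)"

lemma Sigma_inv_diagm: "Sigma_inv M \<tau> n p \<theta> = diagm p (dg M \<tau> n p \<theta>)"
proof (rule eq_matI)
  fix i j assume "i < dim_row (diagm p (dg M \<tau> n p \<theta>))" "j < dim_col (diagm p (dg M \<tau> n p \<theta>))"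
  hence ij: "i < p" "j < p" by auto
  have "(\<Sum>m<p div 2. \<theta> m * (\<tau> / sqrt (real n)) * (unit_vec p m $ i) * (unit_vec p m $ j))
      = (\<Sum>m<p div 2. if m = i then (if i = j then \<theta> i * (\<tau> / sqrt (real n)) else 0) else 0)"
    using ij by (intro sum.cong) auto
  also have "\<dots> = (if i < p div 2 then (if i = j then \<theta> i * (\<tau> / sqrt (real n)) else 0) else 0)"
    by (subst sum.delta) auto
  finally show "Sigma_inv M \<tau> n p \<theta> $$ (i, j) = diagm p (dg M \<tau> n p \<theta>) $$ (i, j)"
    using ij by (auto simp: Sigma_inv_def dg_def)
qed (auto simp: Sigma_inv_def)

lemma dg_pos:
  assumes "M > 0" "\<tau> \<ge> 0" "\<And>i. \<theta> i \<ge> 0"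
  shows "dg M \<tau> n p \<theta> i > 0"
  using assms unfolding dg_def by (auto intro!: add_pos_nonneg)

lemma Sigma_diagm:
  assumes "M > 0" "\<tau> \<ge> 0" "\<And>i. \<theta> i \<ge> 0"
  shows "Sigma M \<tau> n p \<theta> = diagm p (\<lambda>i. 1 / dg M \<tau> n p \<theta> i)"
  unfolding Sigma_def Sigma_inv_diagm
  using dg_pos[OF assms] by (intro minv_diagm) (auto simp: less_le)

lemma minv_Sigma:
  assumes "M > 0" "\<tau> \<ge> 0" "\<And>i. \<theta> i \<ge> 0"
  shows "minv (Sigma M \<tau> n p \<theta>) = diagm p (dg M \<tau> n p \<theta>)"
  unfolding Sigma_diagm[OF assms]
  using dg_pos[OF assms] by (subst minv_diagm) (auto simp: less_le)

lemma w_GMV_Sigma: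
  assumes "M > 0" "\<tau> \<ge> 0" "\<And>i. \<theta> i \<ge> 0"
  shows "w_GMV (Sigma M \<tau> n p \<theta>) = vec p (\<lambda>i. dg M \<tau> n p \<theta> i / (\<Sum>j<p. dg M \<tau> n p \<theta> j))"
proof -
  let ?d = "dg M \<tau> n p \<theta>"
  have v: "diagm p ?d *\<^sub>v vec p (\<lambda>_. 1) = vec p ?d"
  proof (rule eq_vecI)
    fix i assume "i < dim_vec (vec p ?d)"
    hence i: "i < p" by simp
    have "(diagm p ?d *\<^sub>v vec p (\<lambda>_. 1)) $ i = (\<Sum>k\<in>{0..<p}. diagm p ?d $$ (i,k))"
      using i by (simp add: scalar_prod_def row_def del: diagm_index)
    also have "\<dots> = (\<Sum>k\<in>{0..<p}. if k = i then ?d i else 0)"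
      using i by (intro sum.cong) auto
    also have "\<dots> = ?d i" using i by (subst sum.delta) auto
    finally show "(diagm p ?d *\<^sub>v vec p (\<lambda>_. 1)) $ i = vec p ?d $ i" using i by simp
  qed auto
  have s: "vec p (\<lambda>_. 1) \<bullet> vec p ?d = (\<Sum>j<p. ?d j)"
    by (simp add: scalar_prod_def atLeast0LessThan)
  show ?thesis
    unfolding w_GMV_def Let_def minv_Sigma[OF assms] 
    by (simp add: Sigma_diagm[OF assms] v s del: diagm_index) (rule eq_vecI, auto)
qed

definition phi :: "real \<Rightarrow> real \<Rightarrow> real" where
  "phi d x = (2 * pi) powr (- 1 / 2) * (1 / d) powr (- 1 / 2) * exp (- (1/2) * (d * x\<^sup>2))"

lemma mvn_density_Sigma:
  assumes "M > 0" "\<tau> \<ge> 0" "\<And>i. \<theta> i \<ge> 0"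
  shows "mvn_density (Sigma M \<tau> n p \<theta>) x = (\<Prod>i<p. phi (dg M \<tau> n p \<theta> i) (x i))"
proof -
  let ?d = "dg M \<tau> n p \<theta>"
  have q: "(\<Sum>i<p. \<Sum>j<p. x i * diagm p ?d $$ (i,j) * x j) = (\<Sum>i<p. ?d i * (x i)\<^sup>2)"
  proof (rule sum.cong)
    fix i assume "i \<in> {..<p}"
    hence i: "i < p" by simp
    have "(\<Sum>j<p. x i * diagm p ?d $$ (i,j) * x j) = (\<Sum>j<p. if j = i then ?d i * (x i)\<^sup>2 else 0)"
      using i by (intro sum.cong) (auto simp: power2_eq_square)
    also have "\<dots> = ?d i * (x i)\<^sup>2" using i by (subst sum.delta) auto
    finally show "(\<Sum>j<p. x i * diagm p ?d $$ (i,j) * x j) = ?d i * (x i)\<^sup>2" .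
  qed simp
  have pw: "(2 * pi) powr (- real p / 2) = (\<Prod>i<p. (2 * pi) powr (- 1 / 2))"
  proof -
    have "(2 * pi) powr (- real p / 2) = (2 * pi) powr (\<Sum>i<p. - 1 / 2)" by simp
    also have "\<dots> = (\<Prod>i<p. (2 * pi) powr (- 1 / 2))" by (rule powr_sum) simp
    finally show ?thesis .
  qed
  have e: "exp (- (1/2) * (\<Sum>i<p. ?d i * (x i)\<^sup>2)) = (\<Prod>i<p. exp (- (1/2) * (?d i * (x i)\<^sup>2)))"
    by (simp add: sum_distrib_left exp_sum)
  have dS: "dim_row (Sigma M \<tau> n p \<theta>) = p" by (simp add: Sigma_diagm[OF assms] del: diagm_index)
  have detS: "det (Sigma M \<tau> n p \<theta>) = (\<Prod>i<p. 1 / ?d i)" by (simp add: Sigma_diagm[OF assms] det_diagm del: diagm_index)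
  have "mvn_density (Sigma M \<tau> n p \<theta>) x = (2 * pi) powr (- real p / 2) * (\<Prod>i<p. 1 / ?d i) powr (- 1 / 2) *
      exp (- (1/2) * (\<Sum>i<p. ?d i * (x i)\<^sup>2))"
    unfolding mvn_density_def Let_def dS detS minv_Sigma[OF assms] q ..
  also have "\<dots> = (\<Prod>i<p. (2 * pi) powr (- 1 / 2)) * (\<Prod>i<p. (1 / ?d i) powr (- 1 / 2)) *
      (\<Prod>i<p. exp (- (1/2) * (?d i * (x i)\<^sup>2)))"
    unfolding pw e prod_powr_distrib ..
  also have "\<dots> = (\<Prod>i<p. phi (?d i) (x i))"
    unfolding phi_def prod.distrib ..
  finally show ?thesis .
qed


lemma amgm_sqrt: fixes x y :: real assumes "x \<ge> 0" "y \<ge> 0" shows "sqrt (x * y) \<le> (x + y) / 2"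
proof -
  have "0 \<le> (sqrt x - sqrt y)\<^sup>2" by simp
  also have "\<dots> = x + y - 2 * sqrt (x * y)"
    using assms by (simp add: power2_eq_square algebra_simps real_sqrt_mult)
  finally show ?thesis by simp
qed

lemma pw_ineq: fixes a b t :: real assumes "a \<ge> 0" "b \<ge> 0" "t > 0"
  shows "sqrt (a * b) \<le> (t * min a b + (a + b) / t) / 2"
proof -
  have key: "sqrt (u * v) \<le> (t * u + (u + v) / t) / 2" if "0 \<le> u" "0 \<le> v" for u v
  proof -
    have "u * v = (t * u) * (v / t)" using assms by (simp add: field_simps)
    hence "sqrt (u * v) \<le> (t * u + v / t) / 2"
      using amgm_sqrt[of "t * u" "v / t"] that assms by simp
    also have "\<dots> \<le> (t * u + (u + v) / t) / 2"
      using that assms by (simp add: divide_right_mono add_divide_distrib)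
    finally show ?thesis .
  qed
  show ?thesis
  proof (cases "a \<le> b")
    case True thus ?thesis using key[of a b] assms by simp
  next
    case False thus ?thesis using key[of b a] assms by (simp add: mult.commute add.commute)
  qed
qed

lemma affinity_lower:
  fixes f g h :: "'a \<Rightarrow> real"
  assumes fi: "integrable N f" and gi: "integrable N g" and hi: "integrable N h"
    and nn: "\<And>x. x \<in> space N \<Longrightarrow> f x \<ge> 0 \<and> g x \<ge> 0 \<and> h x = sqrt (f x * g x)"
    and f1: "integral\<^sup>L N f = 1" and g1: "integral\<^sup>L N g = 1" and hB: "integral\<^sup>L N h = B" and B: "B > 0"
  shows "affinity N f g \<ge> B\<^sup>2 / 2"
proof -
  define t where "t = 2 / B"
  have t: "t > 0" using B by (simp add: t_def)
  define A where "A = (\<integral>x. min (f x) (g x) \<partial>N)"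
  have mi: "integrable N (\<lambda>x. min (f x) (g x))" using fi gi by auto
  have ri: "integrable N (\<lambda>x. (t * min (f x) (g x) + (f x + g x) / t) / 2)"
    using mi fi gi by auto
  have "B \<le> (\<integral>x. (t * min (f x) (g x) + (f x + g x) / t) / 2 \<partial>N)"
    unfolding hB[symmetric]
  proof (intro integral_mono[OF hi ri])
    fix x assume x: "x \<in> space N"
    show "h x \<le> (t * min (f x) (g x) + (f x + g x) / t) / 2"
      using nn[OF x] pw_ineq[of "f x" "g x" t] t by auto
  qed
  also have "\<dots> = (t * A + 2 / t) / 2"
    using mi fi gi f1 g1 by (simp add: A_def)
  also have "\<dots> = (t * A + B) / 2" by (simp add: t_def)
  finally have "B \<le> t * A" by simp
  hence "B * B \<le> 2 * A" using B by (simp add: t_def field_simps)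
  thus ?thesis by (simp add: affinity_def A_def power2_eq_square)
qed

lemma psf_lborel: "product_sigma_finite (\<lambda>_::nat. lborel :: real measure)"
  by (simp add: product_sigma_finite_def sigma_finite_lborel)

lemma psf_inner: "product_sigma_finite (\<lambda>_::nat. PiM {..<p} (\<lambda>_::nat. lborel :: real measure))"
  unfolding product_sigma_finite_def
  using product_sigma_finite.sigma_finite[OF psf_lborel, of "{..<p}"] by simp

lemma prod_integral:
  fixes g :: "nat \<Rightarrow> real \<Rightarrow> real"
  assumes gi: "\<And>j. integrable lborel (g j)"
  shows "integrable (sample_space n p) (\<lambda>X. \<Prod>i<n. \<Prod>j<p. g j (X i j))"
    and "(\<integral>X. (\<Prod>i<n. \<Prod>j<p. g j (X i j)) \<partial>sample_space n p) = (\<Prod>j<p. integral\<^sup>L lborel (g j)) ^ n"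
proof -
  have ii: "integrable (PiM {..<p} (\<lambda>_. lborel)) (\<lambda>x. \<Prod>j<p. g j (x j))"
    by (rule product_sigma_finite.product_integrable_prod[OF psf_lborel]) (auto intro: gi)
  have iv: "(\<integral>x. (\<Prod>j<p. g j (x j)) \<partial>PiM {..<p} (\<lambda>_. lborel)) = (\<Prod>j<p. integral\<^sup>L lborel (g j))"
    by (rule product_sigma_finite.product_integral_prod[OF psf_lborel]) (auto intro: gi)
  show "integrable (sample_space n p) (\<lambda>X. \<Prod>i<n. \<Prod>j<p. g j (X i j))"
    unfolding sample_space_def
    using product_sigma_finite.product_integrable_prod[OF psf_inner, where I="{..<n}" and f="\<lambda>i x. \<Prod>j<p. g j (x j)"] ii
    by simp
  have "(\<integral>X. (\<Prod>i<n. \<Prod>j<p. g j (X i j)) \<partial>sample_space n p) = (\<Prod>i<n. (\<Prod>j<p. integral\<^sup>L lborel (g j)))"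
    unfolding sample_space_def
    using product_sigma_finite.product_integral_prod[OF psf_inner, where I="{..<n}" and f="\<lambda>i x. \<Prod>j<p. g j (x j)"] ii iv
    by simp
  thus "(\<integral>X. (\<Prod>i<n. \<Prod>j<p. g j (X i j)) \<partial>sample_space n p) = (\<Prod>j<p. integral\<^sup>L lborel (g j)) ^ n"
    by simp
qed

lemma phi_alt: "d > 0 \<Longrightarrow> phi d x = sqrt d / sqrt (2 * pi) * exp (- (d * x\<^sup>2) / 2)"
  unfolding phi_def
  by (simp add: powr_minus powr_half_sqrt[symmetric] powr_divide divide_simps)

lemma phi_normal: "d > 0 \<Longrightarrow> phi d x = normal_density 0 (1 / sqrt d) x"
  unfolding phi_alt normal_density_def
  by (simp add: real_sqrt_divide real_sqrt_mult power_divide divide_simps)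

lemma phi_int: "d > 0 \<Longrightarrow> integrable lborel (phi d)" "d > 0 \<Longrightarrow> integral\<^sup>L lborel (phi d) = 1"
proof -
  assume d: "d > 0"
  have e: "phi d = normal_density 0 (1 / sqrt d)" using phi_normal[OF d] by auto
  show "integrable lborel (phi d)" unfolding e using d by simp
  show "integral\<^sup>L lborel (phi d) = 1" unfolding e using d by simp
qed

definition Kf :: "real \<Rightarrow> real \<Rightarrow> real" where
  "Kf d e = sqrt (sqrt (d * e) * 2 / (d + e))"

lemma phi_sqrt: assumes "d > 0" "e > 0"
  shows "sqrt (phi d x * phi e x) = Kf d e * phi ((d + e) / 2) x"
proof -
  have ex: "exp (- (d * x\<^sup>2) / 2) * exp (- (e * x\<^sup>2) / 2) = (exp (- ((d + e) / 2 * x\<^sup>2) / 2))\<^sup>2"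
    by (simp add: exp_add[symmetric] power2_eq_square exp_add[symmetric] algebra_simps)
  have "phi d x * phi e x = (sqrt d * sqrt e) / (2 * pi) * (exp (- ((d + e) / 2 * x\<^sup>2) / 2))\<^sup>2"
    using assms ex unfolding phi_alt[OF assms(1)] phi_alt[OF assms(2)]
    by (simp add: field_simps)
  hence "sqrt (phi d x * phi e x) = sqrt (sqrt d * sqrt e) / sqrt (2 * pi) * exp (- ((d + e) / 2 * x\<^sup>2) / 2)"
    by (simp add: real_sqrt_mult real_sqrt_divide)
  also have "\<dots> = Kf d e * phi ((d + e) / 2) x"
  proof -
    have pos: "(d + e) / 2 > 0" using assms by simp
    have "Kf d e * sqrt ((d + e) / 2) = sqrt (sqrt (d * e) * 2 / (d + e) * ((d + e) / 2))"
      unfolding Kf_def by (rule real_sqrt_mult[symmetric])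
    also have "\<dots> = sqrt (sqrt d * sqrt e)"
    proof -
      have "sqrt (d * e) * 2 / (d + e) * ((d + e) / 2) = sqrt d * sqrt e"
        using assms by (simp add: real_sqrt_mult field_simps)
      thus ?thesis by (simp only:)
    qed
    finally have k: "Kf d e * sqrt ((d + e) / 2) = sqrt (sqrt d * sqrt e)" .
    show ?thesis unfolding phi_alt[OF pos] k[symmetric] by simp
  qed
  finally show ?thesis .
qed



lemma sqrt_prod: "sqrt (\<Prod>x\<in>A. f x) = (\<Prod>x\<in>A. sqrt (f x))"
  by (induction A rule: infinite_finite_induct) (auto simp: real_sqrt_mult)

lemma phi_nonneg: "d > 0 \<Longrightarrow> phi d x \<ge> 0"
  by (simp add: phi_alt)

lemma Kf_pos: "d > 0 \<Longrightarrow> e > 0 \<Longrightarrow> Kf d e > 0"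
  by (simp add: Kf_def)

lemma joint_density_Sigma:
  assumes "M > 0" "\<tau> \<ge> 0" "\<And>i. \<theta> i \<ge> 0"
  shows "joint_density n (Sigma M \<tau> n p \<theta>) = (\<lambda>X. \<Prod>i<n. \<Prod>j<p. phi (dg M \<tau> n p \<theta> j) (X i j))"
  by (rule ext) (simp add: joint_density_def mvn_density_Sigma[OF assms])

lemma affinity_Sigma:
  assumes M: "M > 0" and tau: "\<tau> \<ge> 0" and th: "\<And>i. \<theta> i \<ge> 0" and th': "\<And>i. \<theta>' i \<ge> 0"
  shows "affinity (sample_space n p) (joint_density n (Sigma M \<tau> n p \<theta>)) (joint_density n (Sigma M \<tau> n p \<theta>'))
    \<ge> ((\<Prod>j<p. Kf (dg M \<tau> n p \<theta> j) (dg M \<tau> n p \<theta>' j)) ^ n)\<^sup>2 / 2"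
proof -
  define d where "d = dg M \<tau> n p \<theta>"
  define e where "e = dg M \<tau> n p \<theta>'"
  have dp: "\<And>j. d j > 0" unfolding d_def by (rule dg_pos[OF M tau th])
  have ep: "\<And>j. e j > 0" unfolding e_def by (rule dg_pos[OF M tau th'])
  have cp: "\<And>j. (d j + e j) / 2 > 0" using dp ep by (simp add: add_pos_pos)
  define h where "h = (\<lambda>X. \<Prod>i<n. \<Prod>j<p. (\<lambda>j x. Kf (d j) (e j) * phi ((d j + e j) / 2) x) j (X i j))"
  have gi: "integrable lborel (\<lambda>x. Kf (d j) (e j) * phi ((d j + e j) / 2) x)" for j
    using phi_int(1)[OF cp[of j]] by simp
  have gv: "integral\<^sup>L lborel (\<lambda>x. Kf (d j) (e j) * phi ((d j + e j) / 2) x) = Kf (d j) (e j)" for j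
    using phi_int[OF cp[of j]] by simp
  show ?thesis
    unfolding joint_density_Sigma[OF M tau th] joint_density_Sigma[OF M tau th'] d_def[symmetric] e_def[symmetric]
  proof (rule affinity_lower)
    show "integrable (sample_space n p) (\<lambda>X. \<Prod>i<n. \<Prod>j<p. phi (d j) (X i j))"
      using prod_integral(1)[of "\<lambda>j. phi (d j)" n p] phi_int(1)[OF dp] by simp
    show "integrable (sample_space n p) (\<lambda>X. \<Prod>i<n. \<Prod>j<p. phi (e j) (X i j))"
      using prod_integral(1)[of "\<lambda>j. phi (e j)" n p] phi_int(1)[OF ep] by simp
    show "integrable (sample_space n p) h"
      unfolding h_def by (rule prod_integral(1)) (rule gi)
    show "(\<integral>X. (\<Prod>i<n. \<Prod>j<p. phi (d j) (X i j)) \<partial>sample_space n p) = 1"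
      using prod_integral(2)[of "\<lambda>j. phi (d j)" n p] phi_int[OF dp] by simp
    show "(\<integral>X. (\<Prod>i<n. \<Prod>j<p. phi (e j) (X i j)) \<partial>sample_space n p) = 1"
      using prod_integral(2)[of "\<lambda>j. phi (e j)" n p] phi_int[OF ep] by simp
    show "integral\<^sup>L (sample_space n p) h = (\<Prod>j<p. Kf (d j) (e j)) ^ n"
      unfolding h_def by (subst prod_integral(2)) (rule gi, simp add: phi_int(2)[OF cp])
    show "(\<Prod>j<p. Kf (d j) (e j)) ^ n > 0"
      using Kf_pos[OF dp ep] by (simp add: prod_pos)
    fix X
    show "0 \<le> (\<Prod>i<n. \<Prod>j<p. phi (d j) (X i j)) \<and> 0 \<le> (\<Prod>i<n. \<Prod>j<p. phi (e j) (X i j)) \<and>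
          h X = sqrt ((\<Prod>i<n. \<Prod>j<p. phi (d j) (X i j)) * (\<Prod>i<n. \<Prod>j<p. phi (e j) (X i j)))"
      using phi_nonneg[OF dp] phi_nonneg[OF ep]
      by (simp add: h_def prod_nonneg prod.distrib[symmetric] sqrt_prod phi_sqrt[OF dp ep])
  qed
qed



lemma term_bound:
  fixes A u \<delta> M :: real
  assumes M: "M > 0" and u: "0 \<le> u" "u \<le> 2 / M"
  shows "(A + u * \<delta>)\<^sup>2 + (\<delta> / M)\<^sup>2 \<ge> A\<^sup>2 / 5"
proof -
  define v where "v = 1 / M\<^sup>2"
  have v: "v > 0" using M by (simp add: v_def)
  have dv: "(\<delta> / M)\<^sup>2 = v * \<delta>\<^sup>2" by (simp add: v_def power_divide)
  have id: "(u\<^sup>2 + v) * ((A + u * \<delta>)\<^sup>2 + v * \<delta>\<^sup>2) = A\<^sup>2 * v + (u * A + (u\<^sup>2 + v) * \<delta>)\<^sup>2"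
    by (simp add: power2_eq_square algebra_simps)
  have u2: "u\<^sup>2 \<le> 4 * v"
  proof -
    have "u\<^sup>2 \<le> (2 / M)\<^sup>2" using u by (intro power_mono) auto
    thus ?thesis by (simp add: v_def power_divide)
  qed
  let ?L = "(A + u * \<delta>)\<^sup>2 + v * \<delta>\<^sup>2"
  have L0: "?L \<ge> 0" using v by simp
  have "A\<^sup>2 * v \<le> (u\<^sup>2 + v) * ?L" unfolding id by simp
  also have "\<dots> \<le> (5 * v) * ?L" using u2 L0 by (intro mult_right_mono) auto
  finally have "A\<^sup>2 * v \<le> (5 * v) * ?L" .
  hence "A\<^sup>2 \<le> 5 * ?L" using v by (simp add: mult.commute mult.left_commute)
  thus ?thesis unfolding dv by simp
qed

lemma weight_bound:
  fixes d d' :: "nat \<Rightarrow> real" and p q :: nat and K :: "nat set" and M a :: real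
  assumes M: "M > 0" and a: "a > 0" and pq: "2 * q \<le> p" and p: "p > 0" and K: "K \<subseteq> {..<q}"
    and db: "\<And>i. i < p \<Longrightarrow> 1 / M \<le> d i \<and> d i \<le> 2 / M"
    and db': "\<And>i. i < p \<Longrightarrow> 1 / M \<le> d' i \<and> d' i \<le> 2 / M"
    and tail: "\<And>i. q \<le> i \<Longrightarrow> i < p \<Longrightarrow> d i = 1 / M \<and> d' i = 1 / M"
    and Kd: "\<And>i. i \<in> K \<Longrightarrow> \<bar>d' i - d i\<bar> = a"
  shows "(\<Sum>i<p. (d' i / (\<Sum>j<p. d' j) - d i / (\<Sum>j<p. d j))\<^sup>2) \<ge> real (card K) * (a\<^sup>2 * M\<^sup>2 / (20 * (real p)\<^sup>2))"
proof -
  define D where "D = (\<Sum>j<p. d j)"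
  define D' where "D' = (\<Sum>j<p. d' j)"
  define \<delta> where "\<delta> = 1 / D' - 1 / D"
  define x where "x i = d' i / D' - d i / D" for i
  have D'lo: "D' \<ge> real p / M"
  proof -
    have "(\<Sum>j<p. 1 / M) \<le> D'" unfolding D'_def using db' by (intro sum_mono) auto
    thus ?thesis by simp
  qed
  have D'hi: "D' \<le> real p * 2 / M"
  proof -
    have "D' \<le> (\<Sum>j<p. 2 / M)" unfolding D'_def using db' by (intro sum_mono) auto
    thus ?thesis by simp
  qed
  have D'pos: "D' > 0" using D'lo p M by (smt (verit) divide_pos_pos of_nat_0_less_iff)
  have fK: "finite K" using K finite_subset by blast
  have cardK: "card K \<le> p - q"
  proof -
    have "card K \<le> card {..<q}" using K by (intro card_mono) auto
    thus ?thesis using pq by simp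
  qed
  have disj: "K \<inter> {q..<p} = {}" using K by auto
  have sub: "K \<union> {q..<p} \<subseteq> {..<p}" using K pq by auto
  have "(\<Sum>i<p. (x i)\<^sup>2) \<ge> (\<Sum>i\<in>K \<union> {q..<p}. (x i)\<^sup>2)"
    by (rule sum_mono2) (use sub in auto)
  also have "(\<Sum>i\<in>K \<union> {q..<p}. (x i)\<^sup>2) = (\<Sum>i\<in>K. (x i)\<^sup>2) + (\<Sum>i\<in>{q..<p}. (x i)\<^sup>2)"
    by (rule sum.union_disjoint) (use fK disj in auto)
  also have "(\<Sum>i\<in>{q..<p}. (x i)\<^sup>2) = real (p - q) * (\<delta> / M)\<^sup>2"
  proof -
    have "(\<Sum>i\<in>{q..<p}. (x i)\<^sup>2) = (\<Sum>i\<in>{q..<p}. (\<delta> / M)\<^sup>2)"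
      by (intro sum.cong) (auto simp: x_def \<delta>_def tail diff_divide_distrib[symmetric] divide_simps)
    thus ?thesis by simp
  qed
  finally have s1: "(\<Sum>i<p. (x i)\<^sup>2) \<ge> (\<Sum>i\<in>K. (x i)\<^sup>2) + real (p - q) * (\<delta> / M)\<^sup>2" .
  have "real (p - q) * (\<delta> / M)\<^sup>2 \<ge> real (card K) * (\<delta> / M)\<^sup>2"
    using cardK by (intro mult_right_mono) auto
  hence s2: "(\<Sum>i<p. (x i)\<^sup>2) \<ge> (\<Sum>i\<in>K. (x i)\<^sup>2 + (\<delta> / M)\<^sup>2)"
    using s1 by (simp add: sum.distrib)
  have tb: "(x i)\<^sup>2 + (\<delta> / M)\<^sup>2 \<ge> a\<^sup>2 * M\<^sup>2 / (20 * (real p)\<^sup>2)" if i: "i \<in> K" for i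
  proof -
    have ip: "i < p" using i K pq by auto
    have xi: "x i = (d' i - d i) / D' + d i * \<delta>"
      unfolding x_def \<delta>_def using D'pos by (simp add: field_simps)
    have "(x i)\<^sup>2 + (\<delta> / M)\<^sup>2 \<ge> ((d' i - d i) / D')\<^sup>2 / 5"
      unfolding xi using db[OF ip] M by (intro term_bound) (auto intro: order_trans[of 0 "1/M"])
    moreover have "((d' i - d i) / D')\<^sup>2 = a\<^sup>2 / D'\<^sup>2"
    proof -
      have "(d' i - d i)\<^sup>2 = a\<^sup>2" using Kd[OF i] by (metis power2_abs)
      thus ?thesis by (simp add: power_divide)
    qed
    moreover have "a\<^sup>2 / D'\<^sup>2 \<ge> a\<^sup>2 / (real p * 2 / M)\<^sup>2"
    proof -
      have "D'\<^sup>2 \<le> (real p * 2 / M)\<^sup>2" using D'hi D'pos by (intro power_mono) auto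
      thus ?thesis by (rule divide_left_mono) (use D'pos p M in auto)
    qed
    moreover have "a\<^sup>2 / (real p * 2 / M)\<^sup>2 = a\<^sup>2 * M\<^sup>2 / (4 * (real p)\<^sup>2)"
    proof -
      have "(real p * 2 / M)\<^sup>2 = (real p)\<^sup>2 * 4 / M\<^sup>2" by (simp add: power_divide power_mult_distrib)
      thus ?thesis by simp
    qed
    ultimately show ?thesis by simp
  qed
  have "(\<Sum>i\<in>K. (x i)\<^sup>2 + (\<delta> / M)\<^sup>2) \<ge> (\<Sum>i\<in>K. a\<^sup>2 * M\<^sup>2 / (20 * (real p)\<^sup>2))"
    using tb by (intro sum_mono) auto
  hence "(\<Sum>i<p. (x i)\<^sup>2) \<ge> real (card K) * (a\<^sup>2 * M\<^sup>2 / (20 * (real p)\<^sup>2))"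
    using s2 by simp
  thus ?thesis unfolding x_def D_def D'_def .
qed



lemma ratio_bound:
  fixes d e :: real assumes d: "d > 0" and de: "d \<le> e"
  shows "sqrt (d * e) * 2 / (d + e) \<ge> 1 - ((e - d) / d)\<^sup>2 / 8"
proof -
  define u where "u = sqrt d"
  define v where "v = sqrt e"
  have u: "u > 0" using d by (simp add: u_def)
  have uv: "u \<le> v" using de by (simp add: u_def v_def)
  have du: "d = u\<^sup>2" using d by (simp add: u_def)
  have ev: "e = v\<^sup>2" using d de by (simp add: v_def)
  have sq: "sqrt (d * e) = u * v" by (simp add: u_def v_def real_sqrt_mult)
  have pos: "u\<^sup>2 + v\<^sup>2 > 0" using u by (simp add: add_pos_nonneg)
  have h0: "(v - u)\<^sup>2 = (u\<^sup>2 + v\<^sup>2) - u * v * 2" by (simp add: power2_eq_square algebra_simps)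
  have h1: "1 - u * v * 2 / (u\<^sup>2 + v\<^sup>2) = (v - u)\<^sup>2 / (u\<^sup>2 + v\<^sup>2)"
    unfolding h0 diff_divide_distrib using pos u by simp
  have h2: "(v - u)\<^sup>2 / (u\<^sup>2 + v\<^sup>2) \<le> (v - u)\<^sup>2 / (2 * u\<^sup>2)"
  proof (rule divide_left_mono)
    show "2 * u\<^sup>2 \<le> u\<^sup>2 + v\<^sup>2" using uv u by (simp add: power_mono)
    show "0 < (u\<^sup>2 + v\<^sup>2) * (2 * u\<^sup>2)" using pos u by simp
  qed simp
  have h3: "(v - u)\<^sup>2 / (2 * u\<^sup>2) \<le> ((v\<^sup>2 - u\<^sup>2) / u\<^sup>2)\<^sup>2 / 8"
  proof -
    have e1: "((v\<^sup>2 - u\<^sup>2) / u\<^sup>2)\<^sup>2 / 8 = (v - u)\<^sup>2 * (v + u)\<^sup>2 / (8 * u\<^sup>2 * u\<^sup>2)"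
      by (simp add: power_divide power2_eq_square algebra_simps)
    have e2: "(v - u)\<^sup>2 / (2 * u\<^sup>2) = (v - u)\<^sup>2 * (4 * u\<^sup>2) / (8 * u\<^sup>2 * u\<^sup>2)"
      using u by (simp add: field_simps power2_eq_square)
    have "(v - u)\<^sup>2 * (4 * u\<^sup>2) \<le> (v - u)\<^sup>2 * (v + u)\<^sup>2"
    proof (rule mult_left_mono)
      have "2 * u \<le> v + u" using uv by simp
      hence "(2 * u)\<^sup>2 \<le> (v + u)\<^sup>2" using u by (intro power_mono) auto
      thus "4 * u\<^sup>2 \<le> (v + u)\<^sup>2" by (simp add: power_mult_distrib)
    qed simp
    thus ?thesis unfolding e1 e2 using u by (intro divide_right_mono) auto
  qed
  have L: "sqrt (d * e) * 2 / (d + e) = u * v * 2 / (u\<^sup>2 + v\<^sup>2)"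
    by (subst sq) (simp add: du ev)
  have R: "((e - d) / d)\<^sup>2 / 8 = ((v\<^sup>2 - u\<^sup>2) / u\<^sup>2)\<^sup>2 / 8" by (simp add: du ev)
  show ?thesis using h1 h2 h3 L R by linarith
qed

lemma exp_bound: fixes x :: real assumes "0 \<le> x" "x \<le> 1 / 2" shows "exp (- 2 * x) \<le> 1 - x"
proof -
  have a: "1 + 2 * x \<le> exp (2 * x)" by (rule exp_ge_add_one_self)
  have "exp (- 2 * x) = 1 / exp (2 * x)" by (simp add: exp_minus field_simps)
  also have "\<dots> \<le> 1 / (1 + 2 * x)" using a assms by (intro divide_left_mono) auto
  also have "\<dots> \<le> 1 - x"
  proof -
    have "1 \<le> (1 - x) * (1 + 2 * x)" using assms mult_left_mono[of "x*2" 1 x] by (simp add: algebra_simps)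
    thus ?thesis using assms by (simp add: divide_simps)
  qed
  finally show ?thesis .
qed

lemma pow_bound:
  fixes x :: real and n :: nat assumes "0 \<le> x" "x \<le> 1 / 2" shows "(1 - x) ^ n \<ge> exp (- 2 * x * real n)"
proof -
  have "exp (- 2 * x * real n) = exp (- 2 * x) ^ n" by (simp add: exp_of_nat_mult[symmetric] mult.commute)
  also have "\<dots> \<le> (1 - x) ^ n" using exp_bound[OF assms] by (intro power_mono) auto
  finally show ?thesis .
qed


lemma Theta_01: "\<theta> \<in> Theta q \<Longrightarrow> \<theta> i = 0 \<or> \<theta> i = 1"
  unfolding Theta_def by (cases "i < q") auto

lemma Theta_nonneg: "\<theta> \<in> Theta q \<Longrightarrow> \<theta> i \<ge> 0"
  using Theta_01[of \<theta> q i] by auto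

lemma Theta_le1: "\<theta> \<in> Theta q \<Longrightarrow> \<theta> i \<le> 1"
  using Theta_01[of \<theta> q i] by auto

lemma Theta_finite: "finite (Theta q)"
proof (rule finite_subset)
  show "Theta q \<subseteq> (\<lambda>S m. if m \<in> S then 1 else 0) ` Pow {..<q}"
  proof
    fix \<theta> assume th: "\<theta> \<in> Theta q"
    have "\<theta> = (\<lambda>m. if m \<in> {m. m < q \<and> \<theta> m = 1} then 1 else 0)"
    proof
      fix m show "\<theta> m = (if m \<in> {m. m < q \<and> \<theta> m = 1} then 1 else 0)"
        using th Theta_01[OF th, of m] unfolding Theta_def by auto
    qed
    thus "\<theta> \<in> (\<lambda>S m. if m \<in> S then 1 else 0) ` Pow {..<q}" by blast
  qed
qed simp

lemma hamming_card:
  assumes "\<theta> \<in> Theta q" "\<theta>' \<in> Theta q"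
  shows "hamming q \<theta> \<theta>' = real (card {m\<in>{..<q}. \<theta> m \<noteq> \<theta>' m})"
proof -
  have "hamming q \<theta> \<theta>' = (\<Sum>m<q. if \<theta> m \<noteq> \<theta>' m then 1 else 0)"
    unfolding hamming_def
  proof (rule sum.cong)
    fix m assume "m \<in> {..<q}"
    from Theta_01[OF assms(1), of m] Theta_01[OF assms(2), of m]
    show "\<bar>\<theta> m - \<theta>' m\<bar> = (if \<theta> m \<noteq> \<theta>' m then 1 else 0)" by auto
  qed simp
  also have "\<dots> = real (card {m\<in>{..<q}. \<theta> m \<noteq> \<theta>' m})"
    by (simp add: sum.If_cases Int_def)
  finally show ?thesis .
qed

lemma dg_bounds:
  assumes M: "M > 0" and tau: "\<tau> \<ge> 0" and aM: "\<tau> / sqrt (real n) \<le> 1 / M" and th: "\<theta> \<in> Theta (p div 2)"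
  shows "1 / M \<le> dg M \<tau> n p \<theta> i \<and> dg M \<tau> n p \<theta> i \<le> 2 / M"
proof -
  have a0: "\<tau> / sqrt (real n) \<ge> 0" using tau by simp
  have "\<theta> i * (\<tau> / sqrt (real n)) \<le> 1 * (1 / M)"
    using Theta_le1[OF th, of i] Theta_nonneg[OF th, of i] a0 aM by (intro mult_mono) auto
  moreover have "\<theta> i * (\<tau> / sqrt (real n)) \<ge> 0" using Theta_nonneg[OF th, of i] a0 by (rule mult_nonneg_nonneg)
  ultimately show ?thesis unfolding dg_def by auto
qed

lemma dg_tail: "p div 2 \<le> i \<Longrightarrow> dg M \<tau> n p \<theta> i = 1 / M"
  by (simp add: dg_def)

lemma dg_diff:
  assumes th: "\<theta> \<in> Theta (p div 2)" and th': "\<theta>' \<in> Theta (p div 2)" and m: "m < p div 2" "\<theta> m \<noteq> \<theta>' m"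
    and tau: "\<tau> \<ge> 0"
  shows "\<bar>dg M \<tau> n p \<theta>' m - dg M \<tau> n p \<theta> m\<bar> = \<tau> / sqrt (real n)"
proof -
  have "\<bar>\<theta>' m - \<theta> m\<bar> = 1" using Theta_01[OF th, of m] Theta_01[OF th', of m] m by auto
  hence "\<bar>(\<theta>' m - \<theta> m) * (\<tau> / sqrt (real n))\<bar> = \<tau> / sqrt (real n)"
    using tau by (simp add: abs_mult)
  moreover have "dg M \<tau> n p \<theta>' m - dg M \<tau> n p \<theta> m = (\<theta>' m - \<theta> m) * (\<tau> / sqrt (real n))"
    unfolding dg_def using m(1) by (simp add: left_diff_distrib diff_divide_distrib)
  ultimately show ?thesis by simp
qed

lemma enorm_sq:
  "(enorm (vec p f' - vec p f))\<^sup>2 = (\<Sum>i<p. (f' i - f i)\<^sup>2)"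
proof -
  have "(vec p f' - vec p f) \<bullet> (vec p f' - vec p f) = (\<Sum>i<p. (f' i - f i)\<^sup>2)"
    unfolding scalar_prod_def by (simp add: atLeast0LessThan power2_eq_square)
  moreover have "(\<Sum>i<p. (f' i - f i)\<^sup>2) \<ge> 0" by (simp add: sum_nonneg)
  ultimately show ?thesis unfolding enorm_def by simp
qed

lemma weight_part:
  assumes M: "M > 0" and tau: "\<tau> > 0" and aM: "\<tau> / sqrt (real n) \<le> 1 / M" and p: "p > 0"
    and th: "\<theta> \<in> Theta (p div 2)" and th': "\<theta>' \<in> Theta (p div 2)" and h: "hamming (p div 2) \<theta> \<theta>' \<ge> 1"
    and n: "n > 0"
  shows "(enorm (w_GMV (Sigma M \<tau> n p \<theta>') - w_GMV (Sigma M \<tau> n p \<theta>)))\<^sup>2 / hamming (p div 2) \<theta> \<theta>'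
    \<ge> (\<tau> / sqrt (real n))\<^sup>2 * M\<^sup>2 / (20 * (real p)\<^sup>2)"
proof -
  let ?q = "p div 2"
  define K where "K = {m\<in>{..<?q}. \<theta> m \<noteq> \<theta>' m}"
  let ?a = "\<tau> / sqrt (real n)"
  let ?c = "?a\<^sup>2 * M\<^sup>2 / (20 * (real p)\<^sup>2)"
  have hK: "hamming ?q \<theta> \<theta>' = real (card K)" unfolding K_def by (rule hamming_card[OF th th'])
  have a: "?a > 0" using tau n by simp
  have "(enorm (w_GMV (Sigma M \<tau> n p \<theta>') - w_GMV (Sigma M \<tau> n p \<theta>)))\<^sup>2 =
      (\<Sum>i<p. (dg M \<tau> n p \<theta>' i / (\<Sum>j<p. dg M \<tau> n p \<theta>' j) - dg M \<tau> n p \<theta> i / (\<Sum>j<p. dg M \<tau> n p \<theta> j))\<^sup>2)"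
    unfolding w_GMV_Sigma[OF M less_imp_le[OF tau] Theta_nonneg[OF th]]
      w_GMV_Sigma[OF M less_imp_le[OF tau] Theta_nonneg[OF th']] enorm_sq ..
  also have "\<dots> \<ge> real (card K) * ?c"
  proof (rule weight_bound[OF M a _ p])
    show "2 * ?q \<le> p" by simp
    show "K \<subseteq> {..<?q}" unfolding K_def by auto
    show "\<And>i. i < p \<Longrightarrow> 1 / M \<le> dg M \<tau> n p \<theta> i \<and> dg M \<tau> n p \<theta> i \<le> 2 / M"
      by (rule dg_bounds[OF M less_imp_le[OF tau] aM th])
    show "\<And>i. i < p \<Longrightarrow> 1 / M \<le> dg M \<tau> n p \<theta>' i \<and> dg M \<tau> n p \<theta>' i \<le> 2 / M"
      by (rule dg_bounds[OF M less_imp_le[OF tau] aM th'])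
    show "\<And>i. ?q \<le> i \<Longrightarrow> i < p \<Longrightarrow> dg M \<tau> n p \<theta> i = 1 / M \<and> dg M \<tau> n p \<theta>' i = 1 / M"
      by (simp add: dg_tail)
    show "\<And>i. i \<in> K \<Longrightarrow> \<bar>dg M \<tau> n p \<theta>' i - dg M \<tau> n p \<theta> i\<bar> = ?a"
      unfolding K_def using dg_diff[OF th th' _ _ less_imp_le[OF tau]] by auto
  qed
  finally have e: "real (card K) * ?c \<le> (enorm (w_GMV (Sigma M \<tau> n p \<theta>') - w_GMV (Sigma M \<tau> n p \<theta>)))\<^sup>2" .
  have cK: "real (card K) > 0" using h hK by simp
  show ?thesis unfolding hK using e cK by (simp add: pos_le_divide_eq mult.commute)
qed

lemma Kf_same: "d > 0 \<Longrightarrow> Kf d d = 1"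
  by (simp add: Kf_def)

lemma Kf_sym: "Kf d e = Kf e d"
  by (simp add: Kf_def mult.commute add.commute)

lemma affinity_part:
  assumes M: "M > 0" and tau: "\<tau> > 0" and aM: "\<tau> / sqrt (real n) \<le> 1 / M" and n: "n > 0"
    and th: "\<theta> \<in> Theta (p div 2)" and th': "\<theta>' \<in> Theta (p div 2)" and h: "hamming (p div 2) \<theta> \<theta>' = 1"
  shows "affinity (sample_space n p) (joint_density n (Sigma M \<tau> n p \<theta>)) (joint_density n (Sigma M \<tau> n p \<theta>'))
    \<ge> exp (- (\<tau>\<^sup>2 * M\<^sup>2 / 4)) / 2"
proof -
  let ?q = "p div 2"
  let ?a = "\<tau> / sqrt (real n)"
  let ?d = "dg M \<tau> n p \<theta>" and ?e = "dg M \<tau> n p \<theta>'"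
  define K where "K = {m\<in>{..<?q}. \<theta> m \<noteq> \<theta>' m}"
  have "card K = 1" using h hamming_card[OF th th'] unfolding K_def by simp
  then obtain m where Km: "K = {m}" by (rule card_1_singletonE)
  have mq: "m < ?q" "\<theta> m \<noteq> \<theta>' m" using Km unfolding K_def by auto
  have mp: "m < p" using mq by simp
  have dpos: "\<And>j. ?d j > 0" by (rule dg_pos[OF M less_imp_le[OF tau] Theta_nonneg[OF th]])
  have same: "?d j = ?e j" if "j < p" "j \<noteq> m" for j
  proof (cases "j < ?q")
    case True
    hence "j \<notin> K" using that Km by auto
    hence "\<theta> j = \<theta>' j" using True unfolding K_def by auto
    thus ?thesis by (simp add: dg_def)
  qed (simp add: dg_def)
  define k0 where "k0 = Kf (1 / M) (1 / M + ?a)"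
  have km: "Kf (?d m) (?e m) = k0"
  proof -
    have "(\<theta> m = 0 \<and> \<theta>' m = 1) \<or> (\<theta> m = 1 \<and> \<theta>' m = 0)"
      using Theta_01[OF th, of m] Theta_01[OF th', of m] mq by auto
    thus ?thesis using mq unfolding k0_def dg_def by (auto simp: Kf_sym)
  qed
  have prodK: "(\<Prod>j<p. Kf (?d j) (?e j)) = k0"
  proof -
    have "(\<Prod>j<p. Kf (?d j) (?e j)) = Kf (?d m) (?e m) * (\<Prod>j\<in>{..<p} - {m}. Kf (?d j) (?e j))"
      using mp by (subst prod.remove[of _ m]) auto
    also have "(\<Prod>j\<in>{..<p} - {m}. Kf (?d j) (?e j)) = 1"
    proof (rule prod.neutral, rule ballI)
      fix j assume "j \<in> {..<p} - {m}"
      hence j: "j < p" "j \<noteq> m" by auto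
      show "Kf (?d j) (?e j) = 1" using same[OF j] dpos[of j] Kf_same by metis
    qed
    finally show ?thesis using km by simp
  qed
  have a0: "?a > 0" using tau n by simp
  have Mi: "1 / M > 0" using M by simp
  have k0sq: "k0\<^sup>2 = sqrt (1 / M * (1 / M + ?a)) * 2 / (1 / M + (1 / M + ?a))"
    unfolding k0_def Kf_def using Mi a0 by (subst real_sqrt_pow2) (auto intro!: divide_nonneg_pos)
  define x where "x = (?a * M)\<^sup>2 / 8"
  have r: "((1 / M + ?a) - 1 / M) / (1 / M) = ?a * M" by simp
  have "k0\<^sup>2 \<ge> 1 - (((1 / M + ?a) - 1 / M) / (1 / M))\<^sup>2 / 8"
    unfolding k0sq by (rule ratio_bound[OF Mi]) (use a0 in simp)
  hence rb: "k0\<^sup>2 \<ge> 1 - x" unfolding r x_def .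
  have x0: "0 \<le> x" and x1: "x \<le> 1 / 2"
  proof -
    show "0 \<le> x" by (simp add: x_def)
    have "?a * M \<le> 1" using aM M by (simp add: field_simps)
    moreover have "?a * M \<ge> 0" using a0 M by (intro mult_nonneg_nonneg) auto
    ultimately have "(?a * M)\<^sup>2 \<le> 1" by (simp add: power_le_one)
    thus "x \<le> 1 / 2" by (simp add: x_def)
  qed
  have xn: "2 * x * real n = \<tau>\<^sup>2 * M\<^sup>2 / 4"
    unfolding x_def using n by (simp add: power_divide power_mult_distrib)
  have A: "((\<Prod>j<p. Kf (?d j) (?e j)) ^ n)\<^sup>2 / 2 \<le> affinity (sample_space n p) (joint_density n (Sigma M \<tau> n p \<theta>)) (joint_density n (Sigma M \<tau> n p \<theta>'))"
    by (rule affinity_Sigma[OF M less_imp_le[OF tau] Theta_nonneg[OF th] Theta_nonneg[OF th']])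
  have B: "((\<Prod>j<p. Kf (?d j) (?e j)) ^ n)\<^sup>2 = (k0\<^sup>2) ^ n"
    unfolding prodK by (simp add: power_mult[symmetric] mult.commute)
  have C1: "(1 - x) ^ n \<le> (k0\<^sup>2) ^ n"
    using rb x1 by (intro power_mono) auto
  have C2: "exp (- 2 * x * real n) \<le> (1 - x) ^ n" by (rule pow_bound[OF x0 x1])
  have "exp (- (\<tau>\<^sup>2 * M\<^sup>2 / 4)) = exp (- 2 * x * real n)" using xn by simp
  thus ?thesis using A B C1 C2 by linarith
qed



lemma lhs_bound:
  assumes M: "M > 0" and tau: "\<tau> > 0" and n: "n > 0" and aM: "\<tau> / sqrt (real n) \<le> 1 / M" and p2: "p \<ge> 2"
  shows "lhs_quantity M \<tau> n p \<ge> (\<tau>\<^sup>2 * M\<^sup>2 * exp (- (\<tau>\<^sup>2 * M\<^sup>2 / 4)) / 320) / (real n * real p)"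
proof -
  let ?q = "p div 2"
  let ?S = "Sigma M \<tau> n p"
  define S1 where "S1 = {(enorm (w_GMV (?S \<theta>') - w_GMV (?S \<theta>)))\<^sup>2 / hamming ?q \<theta> \<theta>' | \<theta> \<theta>'.
            \<theta> \<in> Theta ?q \<and> \<theta>' \<in> Theta ?q \<and> hamming ?q \<theta> \<theta>' \<ge> 1}"
  define S2 where "S2 = {affinity (sample_space n p) (joint_density n (?S \<theta>)) (joint_density n (?S \<theta>')) | \<theta> \<theta>'.
            \<theta> \<in> Theta ?q \<and> \<theta>' \<in> Theta ?q \<and> hamming ?q \<theta> \<theta>' = 1}"
  have lq: "lhs_quantity M \<tau> n p = Min S1 * (real ?q / 2) * Min S2"
    unfolding lhs_quantity_def Let_def S1_def S2_def ..
  have p0: "p > 0" using p2 by simp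
  have q1: "?q \<ge> 1" using p2 by simp
  define t0 where "t0 = (\<lambda>_::nat. 0::real)"
  define t1 where "t1 = (\<lambda>m::nat. if m = 0 then 1 else (0::real))"
  have t0: "t0 \<in> Theta ?q" unfolding t0_def Theta_def by simp
  have t1: "t1 \<in> Theta ?q" unfolding t1_def Theta_def using q1 by auto
  have h01: "hamming ?q t0 t1 = 1"
  proof -
    have "hamming ?q t0 t1 = (\<Sum>m<?q. if m = 0 then 1 else 0)"
      unfolding hamming_def t0_def t1_def by (intro sum.cong) auto
    also have "\<dots> = 1" using q1 by (subst sum.delta) auto
    finally show ?thesis .
  qed
  have fT: "finite {\<theta>. \<theta> \<in> Theta ?q}" using Theta_finite by simp
  have fin1: "finite S1"
    by (rule finite_subset[OF _ finite_image_set2[OF fT fT, of "\<lambda>\<theta> \<theta>'. (enorm (w_GMV (?S \<theta>') - w_GMV (?S \<theta>)))\<^sup>2 / hamming ?q \<theta> \<theta>'"]])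
      (auto simp: S1_def)
  have fin2: "finite S2"
    by (rule finite_subset[OF _ finite_image_set2[OF fT fT, of "\<lambda>\<theta> \<theta>'. affinity (sample_space n p) (joint_density n (?S \<theta>)) (joint_density n (?S \<theta>'))"]])
      (auto simp: S2_def)
  have h01': "1 \<le> hamming ?q t0 t1" using h01 by simp
  have ne1: "S1 \<noteq> {}" unfolding S1_def using t0 t1 h01' by blast
  have ne2: "S2 \<noteq> {}" unfolding S2_def using t0 t1 h01 by auto
  define c1 where "c1 = (\<tau> / sqrt (real n))\<^sup>2 * M\<^sup>2 / (20 * (real p)\<^sup>2)"
  define c2 where "c2 = exp (- (\<tau>\<^sup>2 * M\<^sup>2 / 4)) / 2"
  have m1: "c1 \<le> Min S1"
  proof (subst Min_ge_iff[OF fin1 ne1], intro ballI)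
    fix y assume "y \<in> S1"
    then obtain \<theta> \<theta>' where y: "y = (enorm (w_GMV (?S \<theta>') - w_GMV (?S \<theta>)))\<^sup>2 / hamming ?q \<theta> \<theta>'"
      and th: "\<theta> \<in> Theta ?q" "\<theta>' \<in> Theta ?q" "hamming ?q \<theta> \<theta>' \<ge> 1"
      unfolding S1_def by blast
    show "c1 \<le> y" unfolding y c1_def by (rule weight_part[OF M tau aM p0 th n])
  qed
  have m2: "c2 \<le> Min S2"
  proof (subst Min_ge_iff[OF fin2 ne2], intro ballI)
    fix y assume "y \<in> S2"
    then obtain \<theta> \<theta>' where y: "y = affinity (sample_space n p) (joint_density n (?S \<theta>)) (joint_density n (?S \<theta>'))"
      and th: "\<theta> \<in> Theta ?q" "\<theta>' \<in> Theta ?q" "hamming ?q \<theta> \<theta>' = 1"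
      unfolding S2_def by blast
    show "c2 \<le> y" unfolding y c2_def by (rule affinity_part[OF M tau aM n th])
  qed
  have c1p: "c1 > 0" unfolding c1_def using tau n M p0 by simp
  have c2p: "c2 > 0" unfolding c2_def by simp
  have "c1 * (real ?q / 2) * c2 \<le> Min S1 * (real ?q / 2) * Min S2"
    using m1 m2 c1p c2p by (intro mult_mono) auto
  moreover have "(\<tau>\<^sup>2 * M\<^sup>2 * exp (- (\<tau>\<^sup>2 * M\<^sup>2 / 4)) / 320) / (real n * real p) \<le> c1 * (real ?q / 2) * c2"
  proof -
    define T where "T = \<tau>\<^sup>2 * M\<^sup>2 * exp (- (\<tau>\<^sup>2 * M\<^sup>2 / 4))"
    have Tp: "T > 0" unfolding T_def using tau M by simp
    have qp: "real p \<le> 4 * real ?q"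
    proof -
      have "p \<le> 4 * ?q" using p2 by linarith
      thus ?thesis by linarith
    qed
    have c1e: "c1 = \<tau>\<^sup>2 * M\<^sup>2 / (20 * real n * (real p)\<^sup>2)"
      unfolding c1_def using n by (simp add: power_divide)
    have e1: "c1 * (real ?q / 2) * c2 = T / (320 * real n * real p) * (4 * real ?q / real p)"
      unfolding c1e c2_def T_def using n p0 by (simp add: field_simps power2_eq_square)
    have e2: "(\<tau>\<^sup>2 * M\<^sup>2 * exp (- (\<tau>\<^sup>2 * M\<^sup>2 / 4)) / 320) / (real n * real p) = T / (320 * real n * real p) * 1"
      unfolding T_def by (simp add: field_simps)
    have "1 \<le> 4 * real ?q / real p" using qp p0 by (simp add: le_divide_eq)
    moreover have "T / (320 * real n * real p) \<ge> 0" using Tp by simp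
    ultimately show ?thesis unfolding e1 e2 by (intro mult_left_mono)
  qed
  ultimately show ?thesis unfolding lq by linarith
qed

theorem lemma1:
  fixes M \<tau> :: real and p :: "nat \<Rightarrow> nat"
  assumes "M > 0" and "\<tau> > 0"
    and "filterlim p at_top sequentially"
    and "\<forall>n\<ge>1. \<tau> / sqrt (real n) \<le> M / 3"
    and "\<tau> / M \<le> 1 / 3"
  shows "\<exists>C>0. \<forall>\<^sub>F n in sequentially. lhs_quantity M \<tau> n (p n) \<ge> C / (real n * real (p n))"
proof (intro exI conjI)
  let ?C = "\<tau>\<^sup>2 * M\<^sup>2 * exp (- (\<tau>\<^sup>2 * M\<^sup>2 / 4)) / 320"
  show "?C > 0" using assms(1,2) by simp
  define N where "N = nat \<lceil>(\<tau> * M)\<^sup>2\<rceil> + 1"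
  have ev1: "\<forall>\<^sub>F n in sequentially. 2 \<le> p n" using assms(3) unfolding filterlim_at_top by auto
  have ev2: "\<forall>\<^sub>F n in sequentially. N \<le> n" by (rule eventually_ge_at_top)
  show "\<forall>\<^sub>F n in sequentially. lhs_quantity M \<tau> n (p n) \<ge> ?C / (real n * real (p n))"
    using ev1 ev2
  proof eventually_elim
    case (elim n)
    have n: "n > 0" using elim(2) unfolding N_def by simp
    have "(\<tau> * M)\<^sup>2 \<le> real n"
    proof -
      have "(\<tau> * M)\<^sup>2 \<le> real (nat \<lceil>(\<tau> * M)\<^sup>2\<rceil>)" by linarith
      also have "\<dots> \<le> real n" using elim(2) unfolding N_def by simp
      finally show ?thesis .
    qed
    hence "sqrt ((\<tau> * M)\<^sup>2) \<le> sqrt (real n)" by (rule real_sqrt_le_mono)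
    hence s: "\<tau> * M \<le> sqrt (real n)" using assms(1,2) by simp
    have sp: "sqrt (real n) > 0" using n by simp
    have aM: "\<tau> / sqrt (real n) \<le> 1 / M" using s sp assms(1) by (simp add: field_simps)
    show ?case by (rule lhs_bound[OF assms(1,2) n aM elim(1)])
  qed
qed


end
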